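(* Let $S$ be a nonempty set linearly ordered by $<$, made into a commutative semigroup by $m\cdot n=\max\{m,n\}$, equipped with the discrete topology, and having an identity $e$ (necessarily the least element of $S$). For each $n\in S\setminus\{e\}$ let $q_n=\sum_{j\in Q_n}q_n(j)\delta_j$ be a probability measure on $S$ with finite support $Q_n$ containing $e$, where $q_n(j)>0$ for $j\in Q_n$ and $\sum_{j\in Q_n}q_n(j)=1$. Define $*$ on point masses by $\delta_m*\delta_n=\delta_n*\delta_m=\delta_{\max\{m,n\}}$ if $m\neq n$ or $m=n=e$, and $\delta_n*\delta_n=q_n$ for $n\in S\setminus\{e\}$, extended bilinearly. For $n\in S$ put $\mathcal{L}_n=\{k\in S:k<n\}$. Then $(S,* )$ is a hermitian discrete hypergroup if and only if the following hold: (i) either $S$ is finite or $(S,<,\cdot)$ is isomorphic to $(\mathbb{Z}_+,<,\max)$; (ii) for every $n\in S\setminus\{e\}$, $\mathcal{L}_n\subset Q_n\subset\mathcal{L}_n\cup\{n\}$; (iii) if $\#S>2$, then for all $e\neq m<n$ in $S$: (a) $q_n(e)=q_n(m)\,q_m(e)$, and (b) $q_n(e)\bigl(1+\sum_{e\neq k\in\mathcal{L}_n}\frac{1}{q_k(e)}\bigr)\le 1$. Moreover, with $v_e=1$ and $v_n=1/q_n(e)$ for $n\in S\setminus\{e\}$, condition (iii) is equivalent to: (iii)$'$ if $\#S>2$, then for all $e\neq m<n$ in $S$, (a) $q_n(m)=v_m/v_n$ and (b) $\sum_{k\in\mathcal{L}_n}v_k\le v_n$.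
   Context: $\mathbb{Z}_+=\{0,1,2,\dots\}$. For a measure $\mu$ on a discrete set, $\mu(j)$ denotes $\mu(\{j\})$. A hermitian discrete hypergroup is a discrete set $K$ with a map $*$ from $K\times K$ to finitely supported probability measures on $K$ (extended bilinearly to measures), such that: $(\delta_m*\delta_n)*\delta_k=\delta_m*(\delta_n*\delta_k)$ for all $m,n,k$; there is $e\in K$ with $\delta_m*\delta_e=\delta_e*\delta_m=\delta_m$ for all $m$; $\delta_m*\delta_n=\delta_n*\delta_m$ for all $m,n$ (the involution being the identity map); and $e\in\operatorname{spt}(\delta_m*\delta_n)$ if and only if $m=n$. *)

theory Defs
  imports Complex_Main
begin

text \<open>Finitely supported measures on a discrete set are represented as functions
  \<open>'a \<Rightarrow> real\<close>; \<open>\<mu> j\<close> is the mass of the point \<open>j\<close>.\<close>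

definition supp_m :: "('a \<Rightarrow> real) \<Rightarrow> 'a set" where
  "supp_m \<mu> = {j. \<mu> j \<noteq> 0}"

definition pt_mass :: "'a \<Rightarrow> ('a \<Rightarrow> real)" where
  "pt_mass m = (\<lambda>j. if j = m then 1 else 0)"

definition fin_prob_on :: "'a set \<Rightarrow> ('a \<Rightarrow> real) \<Rightarrow> bool" where
  "fin_prob_on K \<mu> \<longleftrightarrow> (\<forall>j. 0 \<le> \<mu> j) \<and> finite (supp_m \<mu>) \<and> supp_m \<mu> \<subseteq> K
      \<and> sum \<mu> (supp_m \<mu>) = 1"

text \<open>Hermitian discrete hypergroup: \<open>conv m n\<close> is \<open>\<delta>_m * \<delta>_n\<close>; the bilinear
  extension gives \<open>(\<delta>_m*\<delta>_n)*\<delta>_k = \<Sum>_j (\<delta>_m*\<delta>_n)(j) \<delta>_j*\<delta>_k\<close>.\<close>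
definition herm_disc_hypergroup :: "'a set \<Rightarrow> ('a \<Rightarrow> 'a \<Rightarrow> ('a \<Rightarrow> real)) \<Rightarrow> bool" where
  "herm_disc_hypergroup K conv \<longleftrightarrow>
     (\<forall>m\<in>K. \<forall>n\<in>K. fin_prob_on K (conv m n)) \<and>
     (\<forall>m\<in>K. \<forall>n\<in>K. \<forall>k\<in>K. \<forall>i.
        (\<Sum>j\<in>supp_m (conv m n). conv m n j * conv j k i)
      = (\<Sum>j\<in>supp_m (conv n k). conv n k j * conv m j i)) \<and>
     (\<forall>m\<in>K. \<forall>n\<in>K. conv m n = conv n m) \<and>
     (\<exists>e\<in>K. (\<forall>m\<in>K. conv m e = pt_mass m \<and> conv e m = pt_mass m) \<and>
        (\<forall>m\<in>K. \<forall>n\<in>K. e \<in> supp_m (conv m n) \<longleftrightarrow> m = n))"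

definition max_conv :: "'a::linorder \<Rightarrow> ('a \<Rightarrow> 'a \<Rightarrow> real) \<Rightarrow> 'a \<Rightarrow> 'a \<Rightarrow> ('a \<Rightarrow> real)" where
  "max_conv e q m n = (if m \<noteq> n \<or> m = e then pt_mass (max m n) else q n)"

definition lower_set :: "'a::linorder set \<Rightarrow> 'a \<Rightarrow> 'a set" where
  "lower_set S n = {k\<in>S. k < n}"

end

theory Submission
  imports Defs
begin

lemma pt_mass_app: "pt_mass a i = (if i = a then 1 else 0)" by (simp add: pt_mass_def)

lemma supp_pt[simp]: "supp_m (pt_mass a) = {a}"
  by (auto simp: supp_m_def pt_mass_def)

lemma sum_pt_right:
  assumes "finite (supp_m \<mu>)"
  shows "(\<Sum>j\<in>supp_m \<mu>. \<mu> j * pt_mass j i) = \<mu> i"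
proof -
  have "(\<Sum>j\<in>supp_m \<mu>. \<mu> j * pt_mass j i) = (\<Sum>j\<in>supp_m \<mu>. if j = i then \<mu> j else 0)"
    by (rule sum.cong) (auto simp: pt_mass_def)
  also have "\<dots> = \<mu> i" using assms by (simp add: sum.delta' supp_m_def)
  finally show ?thesis .
qed

lemma sum_pt_left: "(\<Sum>j\<in>supp_m (pt_mass a). pt_mass a j * F j) = F a"
  by (simp add: pt_mass_app)

lemma mc_neq: "m \<noteq> n \<Longrightarrow> max_conv e q m n = pt_mass (max m n)"
  by (simp add: max_conv_def)
lemma mc_ee: "max_conv e q e e = pt_mass e"
  by (simp add: max_conv_def)
lemma mc_nn: "n \<noteq> e \<Longrightarrow> max_conv e q n n = q n"
  by (simp add: max_conv_def)
lemma mc_comm: "max_conv e q m n = max_conv e q n m"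
  by (auto simp: max_conv_def max.commute)
lemma mc_e:
  assumes "e \<le> m" shows "max_conv e q e m = pt_mass m" "max_conv e q m e = pt_mass m"
  using assms by (auto simp: max_conv_def max_def)


lemma hypD:
  assumes H: "\<forall>n\<in>S - {e}. (\<forall>j. 0 \<le> q n j) \<and> finite (supp_m (q n)) \<and> supp_m (q n) \<subseteq> S
                        \<and> e \<in> supp_m (q n) \<and> (\<Sum>j\<in>supp_m (q n). q n j) = 1"
    and "n \<in> S" "n \<noteq> e"
  shows "0 \<le> q n j" "finite (supp_m (q n))" "supp_m (q n) \<subseteq> S" "q n e > 0"
    "(\<Sum>j\<in>supp_m (q n). q n j) = 1" "j \<notin> S \<Longrightarrow> q n j = 0"
proof -
  have h: "(\<forall>j. 0 \<le> q n j) \<and> finite (supp_m (q n)) \<and> supp_m (q n) \<subseteq> S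
                        \<and> e \<in> supp_m (q n) \<and> (\<Sum>j\<in>supp_m (q n). q n j) = 1"
    using H assms(2,3) by blast
  then show "0 \<le> q n j" "finite (supp_m (q n))" "supp_m (q n) \<subseteq> S"
    "(\<Sum>j\<in>supp_m (q n). q n j) = 1" by auto
  from h have "q n e \<noteq> 0" "0 \<le> q n e" by (auto simp: supp_m_def)
  then show "q n e > 0" by simp
  show "j \<notin> S \<Longrightarrow> q n j = 0" using h by (auto simp: supp_m_def)
qed

definition assoc_mc :: "'a::linorder set \<Rightarrow> 'a \<Rightarrow> ('a \<Rightarrow> 'a \<Rightarrow> real) \<Rightarrow> bool" where
  "assoc_mc S e q \<longleftrightarrow> (\<forall>m\<in>S. \<forall>n\<in>S. \<forall>k\<in>S. \<forall>i.
        (\<Sum>j\<in>supp_m (max_conv e q m n). max_conv e q m n j * max_conv e q j k i)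
      = (\<Sum>j\<in>supp_m (max_conv e q n k). max_conv e q n k j * max_conv e q m j i))"

lemma fwd_key:
  assumes eS: "e \<in> S" and emin: "\<forall>n\<in>S. e \<le> n"
    and H: "\<forall>n\<in>S - {e}. (\<forall>j. 0 \<le> q n j) \<and> finite (supp_m (q n)) \<and> supp_m (q n) \<subseteq> S
                        \<and> e \<in> supp_m (q n) \<and> (\<Sum>j\<in>supp_m (q n). q n j) = 1"
    and A: "assoc_mc S e q"
    and NS: "N \<in> S" and KS: "K \<in> S" and Ne: "N \<noteq> e" and Ke: "K \<noteq> e" and NK: "N \<noteq> K"
  shows "q N K * q K e = max_conv e q N (max N K) e"
proof -
  have "(\<Sum>j\<in>supp_m (max_conv e q N N). max_conv e q N N j * max_conv e q j K e)
      = (\<Sum>j\<in>supp_m (max_conv e q N K). max_conv e q N K j * max_conv e q N j e)"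
    using A NS KS unfolding assoc_mc_def by blast
  then have eq: "(\<Sum>j\<in>supp_m (q N). q N j * max_conv e q j K e)
      = (\<Sum>j\<in>supp_m (pt_mass (max N K)). pt_mass (max N K) j * max_conv e q N j e)"
    using Ne NK by (simp add: mc_nn mc_neq)
  have "(\<Sum>j\<in>supp_m (q N). q N j * max_conv e q j K e)
      = (\<Sum>j\<in>supp_m (q N). if j = K then q N K * q K e else 0)"
  proof (rule sum.cong)
    fix j assume j: "j \<in> supp_m (q N)"
    then have "j \<in> S" using hypD(3)[OF H NS Ne] by blast
    show "q N j * max_conv e q j K e = (if j = K then q N K * q K e else 0)"
    proof (cases "j = K")
      case True then show ?thesis using Ke by (simp add: mc_nn)
    next
      case False
      have "e \<le> j" using emin \<open>j \<in> S\<close> by blast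
      have "e < K" using emin KS Ke by force
      then have "max j K \<noteq> e" using \<open>e \<le> j\<close> by (auto simp: max_def)
      then show ?thesis using False by (simp add: mc_neq pt_mass_app)
    qed
  qed simp
  also have "\<dots> = q N K * q K e"
    using hypD(2)[OF H NS Ne] by (simp add: sum.delta' supp_m_def)
  finally show ?thesis using eq by (simp add: sum_pt_left pt_mass_app)
qed

lemma rev_up:
  assumes eS: "e \<in> S" and emin: "\<forall>n\<in>S. e \<le> n"
    and H: "\<forall>n\<in>S - {e}. (\<forall>j. 0 \<le> q n j) \<and> finite (supp_m (q n)) \<and> supp_m (q n) \<subseteq> S
                        \<and> e \<in> supp_m (q n) \<and> (\<Sum>j\<in>supp_m (q n). q n j) = 1"
    and ii: "\<forall>n\<in>S - {e}. lower_set S n \<subseteq> supp_m (q n) \<and> supp_m (q n) \<subseteq> lower_set S n \<union> {n}"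
    and nS: "n \<in> S" and kS: "k \<in> S" and ne: "n \<noteq> e" and nk: "n < k"
  shows "(\<Sum>j\<in>supp_m (q n). q n j * max_conv e q j k i) = max_conv e q n (max n k) i"
proof -
  have "(\<Sum>j\<in>supp_m (q n). q n j * max_conv e q j k i) = (\<Sum>j\<in>supp_m (q n). q n j * pt_mass k i)"
  proof (rule sum.cong)
    fix j assume "j \<in> supp_m (q n)"
    then have "j \<in> lower_set S n \<union> {n}" using ii nS ne by blast
    then have "j < k" using nk by (auto simp: lower_set_def)
    moreover have "max j k = k" using \<open>j < k\<close> by simp
    ultimately show "q n j * max_conv e q j k i = q n j * pt_mass k i" by (simp add: mc_neq)
  qed simp
  also have "\<dots> = pt_mass k i" using hypD(5)[OF H nS ne] by (simp add: sum_distrib_right[symmetric])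
  moreover have "max n k = k" using nk by simp
  ultimately show ?thesis using nk by (simp add: mc_neq)
qed

lemma rel:
  fixes S :: "'a::linorder set"
  assumes eS: "e \<in> S" and emin: "\<forall>n\<in>S. e \<le> n"
    and H: "\<forall>n\<in>S - {e}. (\<forall>j. 0 \<le> q n j) \<and> finite (supp_m (q n)) \<and> supp_m (q n) \<subseteq> S
                        \<and> e \<in> supp_m (q n) \<and> (\<Sum>j\<in>supp_m (q n). q n j) = 1"
    and a: "\<forall>m\<in>S. \<forall>n\<in>S. m \<noteq> e \<and> m < n \<longrightarrow> q n e = q n m * q m e"
    and iS: "i \<in> S" and kS: "k \<in> S" and nS: "n \<in> S" and ik: "i < k" and kn: "k < n" and ke: "k \<noteq> e"
  shows "q n i = q n k * q k i"
proof (cases "i = e")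
  case True then show ?thesis using a kS nS ke kn by auto
next
  case False
  have "i < n" using ik kn by (rule less_trans)
  have 1: "q n e = q n i * q i e" using a iS nS False \<open>i < n\<close> by auto
  have 2: "q k e = q k i * q i e" using a iS kS False ik by auto
  have 3: "q n e = q n k * q k e" using a kS nS ke kn by auto
  have "q i e > 0" using hypD(4)[OF H iS False] .
  have "q n i * q i e = q n k * q k e" using 1 3 by simp
  also have "\<dots> = (q n k * q k i) * q i e" using 2 by (simp add: mult.assoc)
  finally have "q n i * q i e = (q n k * q k i) * q i e" .
  then show ?thesis using \<open>q i e > 0\<close> by simp
qed

lemma rev_down:
  assumes eS: "e \<in> S" and emin: "\<forall>n\<in>S. e \<le> n"
    and H: "\<forall>n\<in>S - {e}. (\<forall>j. 0 \<le> q n j) \<and> finite (supp_m (q n)) \<and> supp_m (q n) \<subseteq> S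
                        \<and> e \<in> supp_m (q n) \<and> (\<Sum>j\<in>supp_m (q n). q n j) = 1"
    and ii: "\<forall>n\<in>S - {e}. lower_set S n \<subseteq> supp_m (q n) \<and> supp_m (q n) \<subseteq> lower_set S n \<union> {n}"
    and a: "\<forall>m\<in>S. \<forall>n\<in>S. m \<noteq> e \<and> m < n \<longrightarrow> q n e = q n m * q m e"
    and nS: "n \<in> S" and kS: "k \<in> S" and ke: "k \<noteq> e" and kn: "k < n"
  shows "(\<Sum>j\<in>supp_m (q n). q n j * max_conv e q j k i) = max_conv e q n (max n k) i"
proof -
  have ne: "n \<noteq> e" using emin kS kn by force
  define Q where "Q = supp_m (q n)"
  have finQ: "finite Q" unfolding Q_def using hypD(2)[OF H nS ne] .
  have QS: "Q \<subseteq> S" unfolding Q_def using hypD(3)[OF H nS ne] .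
  have iin: "lower_set S n \<subseteq> Q" "Q \<subseteq> lower_set S n \<union> {n}" unfolding Q_def using ii nS ne by auto
  have kQ: "k \<in> Q" using iin kS kn by (auto simp: lower_set_def)
  have iik: "lower_set S k \<subseteq> supp_m (q k)" "supp_m (q k) \<subseteq> lower_set S k \<union> {k}" using ii kS ke by auto
  have finLk: "finite (lower_set S k)" using iik(1) hypD(2)[OF H kS ke] finite_subset by blast
  have "max n k = n" using kn by simp
  then have rhs: "max_conv e q n (max n k) i = q n i" using ne by (simp add: mc_nn)
  have "(\<Sum>j\<in>Q. q n j * max_conv e q j k i) = q n i"
  proof (cases "k < i")
    case True
    have "(\<Sum>j\<in>Q. q n j * max_conv e q j k i) = (\<Sum>j\<in>Q. if j = i then q n j else 0)"
    proof (rule sum.cong)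
      fix j assume jQ: "j \<in> Q"
      show "q n j * max_conv e q j k i = (if j = i then q n j else 0)"
      proof (cases "j = k")
        case True
        have "q k i = 0"
        proof (rule ccontr)
          assume "q k i \<noteq> 0"
          then have "i \<in> lower_set S k \<union> {k}" using iik(2) by (auto simp: supp_m_def)
          then show False using \<open>k < i\<close> by (auto simp: lower_set_def)
        qed
        then show ?thesis using True ke \<open>k < i\<close> by (auto simp: mc_nn)
      next
        case False
        then show ?thesis using \<open>k < i\<close> by (auto simp: mc_neq pt_mass_app max_def)
      qed
    qed simp
    also have "\<dots> = q n i" using finQ by (simp add: sum.delta' Q_def supp_m_def)
    finally show ?thesis .
  next
    case False
    show ?thesis
    proof (cases "i = k")
      case False
      with \<open>\<not> k < i\<close> have ik: "i < k" by simp
      have "(\<Sum>j\<in>Q. q n j * max_conv e q j k i) = (\<Sum>j\<in>Q. if j = k then q n k * q k i else 0)"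
      proof (rule sum.cong)
        fix j assume jQ: "j \<in> Q"
        show "q n j * max_conv e q j k i = (if j = k then q n k * q k i else 0)"
          using ik ke by (cases "j = k") (auto simp: mc_nn mc_neq pt_mass_app max_def)
      qed simp
      also have "\<dots> = q n k * q k i" using finQ kQ by (simp add: sum.delta')
      also have "\<dots> = q n i"
      proof (cases "i \<in> S")
        case True then show ?thesis using rel[OF eS emin H a True kS nS ik kn ke] by simp
      next
        case False then show ?thesis using hypD(6)[OF H nS ne] hypD(6)[OF H kS ke] by simp
      qed
      finally show ?thesis .
    next
      case True
      have "(\<Sum>j\<in>Q. q n j * max_conv e q j k i) =
            (\<Sum>j\<in>Q. (if j \<in> lower_set S k then q n k * q k j else 0) + (if j = k then q n k * q k k else 0))"
      proof (rule sum.cong)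
        fix j assume jQ: "j \<in> Q"
        then have jS: "j \<in> S" using QS by blast
        show "q n j * max_conv e q j k i = (if j \<in> lower_set S k then q n k * q k j else 0) + (if j = k then q n k * q k k else 0)"
        proof (cases "j < k")
          case True
          have r: "q n j = q n k * q k j" using rel[OF eS emin H a jS kS nS True kn ke] .
          have jk: "j \<noteq> k" "max j k = k" using True by auto
          have jL: "j \<in> lower_set S k" using True jS by (simp add: lower_set_def)
          have "max_conv e q j k i = 1" using jk \<open>i = k\<close> by (simp add: mc_neq pt_mass_app)
          then show ?thesis using r jL jk(1) by simp
        next
          case False
          have jL: "j \<notin> lower_set S k" using False by (simp add: lower_set_def)
          show ?thesis
          proof (cases "j = k")
            case True then show ?thesis using jL ke \<open>i = k\<close> by (simp add: mc_nn)
          next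
            case False
            then have "k < j" using \<open>\<not> j < k\<close> by simp
            then have "max j k = j" by simp
            then have "max_conv e q j k i = 0" using False \<open>i = k\<close> \<open>k < j\<close> by (simp add: mc_neq pt_mass_app)
            then show ?thesis using jL False by simp
          qed
        qed
      qed simp
      also have "\<dots> = (\<Sum>j\<in>Q. (if j \<in> lower_set S k then q n k * q k j else 0)) + q n k * q k k"
        using finQ kQ by (simp add: sum.distrib sum.delta')
      also have "(\<Sum>j\<in>Q. (if j \<in> lower_set S k then q n k * q k j else 0)) = (\<Sum>j\<in>Q \<inter> lower_set S k. q n k * q k j)"
        using finQ by (simp add: sum.inter_restrict)
      also have "Q \<inter> lower_set S k = lower_set S k" using iin kn by (auto simp: lower_set_def)
      also have "(\<Sum>j\<in>lower_set S k. q n k * q k j) + q n k * q k k = q n k * (\<Sum>j\<in>lower_set S k \<union> {k}. q k j)"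
        using finLk by (simp add: sum_distrib_left lower_set_def algebra_simps)
      also have "(\<Sum>j\<in>lower_set S k \<union> {k}. q k j) = (\<Sum>j\<in>supp_m (q k). q k j)"
        by (rule sum.mono_neutral_right) (use finLk iik(2) in \<open>auto simp: supp_m_def\<close>)
      also have "\<dots> = 1" using hypD(5)[OF H kS ke] .
      finally show ?thesis using True by simp
    qed
  qed
  then show ?thesis using rhs Q_def by simp
qed

lemma conv_fp:
  fixes S :: "'a::linorder set"
  assumes eS: "e \<in> S" and emin: "\<forall>n\<in>S. e \<le> n"
    and H: "\<forall>n\<in>S - {e}. (\<forall>j. 0 \<le> q n j) \<and> finite (supp_m (q n)) \<and> supp_m (q n) \<subseteq> S
                        \<and> e \<in> supp_m (q n) \<and> (\<Sum>j\<in>supp_m (q n). q n j) = 1"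
    and mS: "m \<in> S" and nS: "n \<in> S"
  shows "fin_prob_on S (max_conv e q m n)"
proof (cases "m \<noteq> n \<or> m = e")
  case True
  then have c: "max_conv e q m n = pt_mass (max m n)" by (auto simp: max_conv_def)
  have "max m n \<in> S" using mS nS by (simp add: max_def)
  then show ?thesis unfolding c fin_prob_on_def by (simp add: pt_mass_app)
next
  case False
  then have c: "max_conv e q m n = q n" "n \<noteq> e" by (auto simp: max_conv_def)
  show ?thesis unfolding c(1) fin_prob_on_def using hypD[OF H nS c(2)] by blast
qed

lemma herm_iff:
  fixes S :: "'a::linorder set"
  assumes eS: "e \<in> S" and emin: "\<forall>n\<in>S. e \<le> n"
    and H: "\<forall>n\<in>S - {e}. (\<forall>j. 0 \<le> q n j) \<and> finite (supp_m (q n)) \<and> supp_m (q n) \<subseteq> S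
                        \<and> e \<in> supp_m (q n) \<and> (\<Sum>j\<in>supp_m (q n). q n j) = 1"
  shows "herm_disc_hypergroup S (max_conv e q) \<longleftrightarrow> assoc_mc S e q"
proof
  assume "herm_disc_hypergroup S (max_conv e q)"
  then show "assoc_mc S e q" unfolding herm_disc_hypergroup_def assoc_mc_def by blast
next
  assume A: "assoc_mc S e q"
  have 1: "\<forall>m\<in>S. \<forall>n\<in>S. fin_prob_on S (max_conv e q m n)"
    using conv_fp[OF eS emin H] by blast
  have 3: "\<forall>m\<in>S. \<forall>n\<in>S. max_conv e q m n = max_conv e q n m" by (simp add: mc_comm)
  have 4: "\<forall>m\<in>S. max_conv e q m e = pt_mass m \<and> max_conv e q e m = pt_mass m"
    using emin mc_e by blast
  have 5: "\<forall>m\<in>S. \<forall>n\<in>S. e \<in> supp_m (max_conv e q m n) \<longleftrightarrow> m = n"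
  proof (intro ballI)
    fix m n assume mS: "m \<in> S" and nS: "n \<in> S"
    show "e \<in> supp_m (max_conv e q m n) \<longleftrightarrow> m = n"
    proof (cases "m = n")
      case True
      show ?thesis
      proof (cases "n = e")
        case True then show ?thesis using \<open>m = n\<close> by (simp add: mc_ee)
      next
        case False then show ?thesis using \<open>m = n\<close> hypD[OF H nS False] H nS
          by (auto simp: mc_nn)
      qed
    next
      case False
      have "e \<le> m" "e \<le> n" using emin mS nS by auto
      then have "max m n \<noteq> e" using False by (auto simp: max_def)
      then show ?thesis using False by (simp add: mc_neq)
    qed
  qed
  show "herm_disc_hypergroup S (max_conv e q)"
    unfolding herm_disc_hypergroup_def using 1 3 4 5 A eS unfolding assoc_mc_def by blast
qed

lemma rev_both:
  fixes S :: "'a::linorder set"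
  assumes eS: "e \<in> S" and emin: "\<forall>n\<in>S. e \<le> n"
    and H: "\<forall>n\<in>S - {e}. (\<forall>j. 0 \<le> q n j) \<and> finite (supp_m (q n)) \<and> supp_m (q n) \<subseteq> S
                        \<and> e \<in> supp_m (q n) \<and> (\<Sum>j\<in>supp_m (q n). q n j) = 1"
    and ii: "\<forall>n\<in>S - {e}. lower_set S n \<subseteq> supp_m (q n) \<and> supp_m (q n) \<subseteq> lower_set S n \<union> {n}"
    and a: "\<forall>m\<in>S. \<forall>n\<in>S. m \<noteq> e \<and> m < n \<longrightarrow> q n e = q n m * q m e"
    and nS: "n \<in> S" and kS: "k \<in> S" and ne: "n \<noteq> e" and ke: "k \<noteq> e" and nk: "n \<noteq> k"
  shows "(\<Sum>j\<in>supp_m (q n). q n j * max_conv e q j k i) = max_conv e q n (max n k) i"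
proof (cases "n < k")
  case True show ?thesis by (rule rev_up[OF eS emin H ii nS kS ne True])
next
  case False then have "k < n" using nk by simp
  then show ?thesis using rev_down[OF eS emin H ii a nS kS ke] by blast
qed

lemma assoc_from:
  fixes S :: "'a::linorder set"
  assumes eS: "e \<in> S" and emin: "\<forall>n\<in>S. e \<le> n"
    and H: "\<forall>n\<in>S - {e}. (\<forall>j. 0 \<le> q n j) \<and> finite (supp_m (q n)) \<and> supp_m (q n) \<subseteq> S
                        \<and> e \<in> supp_m (q n) \<and> (\<Sum>j\<in>supp_m (q n). q n j) = 1"
    and ii: "\<forall>n\<in>S - {e}. lower_set S n \<subseteq> supp_m (q n) \<and> supp_m (q n) \<subseteq> lower_set S n \<union> {n}"
    and a: "\<forall>m\<in>S. \<forall>n\<in>S. m \<noteq> e \<and> m < n \<longrightarrow> q n e = q n m * q m e"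
  shows "assoc_mc S e q"
  unfolding assoc_mc_def
proof (intro ballI allI)
  fix m n k i assume mS: "m \<in> S" and nS: "n \<in> S" and kS: "k \<in> S"
  let ?c = "max_conv e q"
  have fin: "\<And>x y. x \<in> S \<Longrightarrow> y \<in> S \<Longrightarrow> finite (supp_m (?c x y)) \<and> supp_m (?c x y) \<subseteq> S"
    using conv_fp[OF eS emin H] unfolding fin_prob_on_def by blast
  have em: "\<And>x. x \<in> S \<Longrightarrow> ?c e x = pt_mass x \<and> ?c x e = pt_mass x" using emin mc_e by blast
  have RB: "\<And>x y. x \<in> S \<Longrightarrow> y \<in> S \<Longrightarrow> x \<noteq> e \<Longrightarrow> y \<noteq> e \<Longrightarrow> x \<noteq> y \<Longrightarrow>
     (\<Sum>j\<in>supp_m (q x). q x j * ?c j y i) = ?c x (max x y) i"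
    using rev_both[OF eS emin H ii a] by blast
  show "(\<Sum>j\<in>supp_m (?c m n). ?c m n j * ?c j k i) = (\<Sum>j\<in>supp_m (?c n k). ?c n k j * ?c m j i)"
  proof (cases "m = e")
    case True
    have "(\<Sum>j\<in>supp_m (?c n k). ?c n k j * ?c m j i) = (\<Sum>j\<in>supp_m (?c n k). ?c n k j * pt_mass j i)"
      using fin[OF nS kS] em True by (intro sum.cong) auto
    also have "\<dots> = ?c n k i" using fin[OF nS kS] by (simp add: sum_pt_right)
    finally show ?thesis using True em[OF nS] by (simp add: sum_pt_left pt_mass_app)
  next
    case me: False
    show ?thesis
    proof (cases "k = e")
      case True
      have "(\<Sum>j\<in>supp_m (?c m n). ?c m n j * ?c j k i) = (\<Sum>j\<in>supp_m (?c m n). ?c m n j * pt_mass j i)"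
        using fin[OF mS nS] em True by (intro sum.cong) auto
      also have "\<dots> = ?c m n i" using fin[OF mS nS] by (simp add: sum_pt_right)
      finally show ?thesis using True em[OF nS] by (simp add: sum_pt_left pt_mass_app)
    next
      case ke: False
      show ?thesis
      proof (cases "n = e")
        case True
        then show ?thesis using em[OF mS] em[OF kS] by (simp add: sum_pt_left pt_mass_app)
      next
        case ne: False
        show ?thesis
        proof (cases "m = n")
          case mn: True
          show ?thesis
          proof (cases "n = k")
            case True
            then show ?thesis using mn ne by (simp add: mc_nn mc_comm)
          next
            case nk: False
            have "(\<Sum>j\<in>supp_m (?c m n). ?c m n j * ?c j k i) = ?c n (max n k) i"
              using RB[OF nS kS ne ke nk] mn ne by (simp add: mc_nn)
            then show ?thesis using nk mn by (simp add: mc_neq sum_pt_left pt_mass_app)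
          qed
        next
          case mn: False
          show ?thesis
          proof (cases "n = k")
            case nk: True
            have "(\<Sum>j\<in>supp_m (?c n k). ?c n k j * ?c m j i) = (\<Sum>j\<in>supp_m (q n). q n j * ?c j m i)"
              using nk ne by (simp add: mc_nn mc_comm)
            also have "\<dots> = ?c n (max n m) i" using RB[OF nS mS ne me] mn by metis
            also have "\<dots> = ?c (max m n) n i" by (simp add: mc_comm max.commute)
            finally show ?thesis using mn nk by (simp add: mc_neq sum_pt_left pt_mass_app)
          next
            case nk: False
            show ?thesis
            proof (cases "m = k")
              case True
              then show ?thesis using mn nk by (simp add: mc_neq sum_pt_left pt_mass_app mc_comm max.commute)
            next
              case mk: False
              have 1: "max m n \<noteq> k" using mk nk by (auto simp: max_def)
              have 2: "m \<noteq> max n k" using mk mn by (auto simp: max_def)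
              show ?thesis using mn nk 1 2 by (simp add: mc_neq sum_pt_left pt_mass_app max.assoc)
            qed
          qed
        qed
      qed
    qed
  qed
qed

lemma nat_iso:
  fixes S :: "'a::linorder set"
  assumes inf: "infinite S" and fin: "\<forall>a\<in>S. finite (lower_set S a)"
    and eS: "e \<in> S" and emin: "\<forall>n\<in>S. e \<le> n"
  shows "\<exists>f::'a \<Rightarrow> nat. bij_betw f S UNIV \<and> (\<forall>a\<in>S. \<forall>b\<in>S. a < b \<longleftrightarrow> f a < f b)"
proof -
  define f where "f a = card (lower_set S a)" for a
  have mono: "f a < f b" if "a \<in> S" "b \<in> S" "a < b" for a b
  proof -
    have "lower_set S a \<subset> lower_set S b"
      using that by (auto simp: lower_set_def)
    then show ?thesis unfolding f_def using fin that(2) by (simp add: psubset_card_mono)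
  qed
  have iff: "\<forall>a\<in>S. \<forall>b\<in>S. a < b \<longleftrightarrow> f a < f b"
  proof (intro ballI iffI)
    fix a b assume "a \<in> S" "b \<in> S" "a < b" then show "f a < f b" using mono by blast
  next
    fix a b assume ab: "a \<in> S" "b \<in> S" "f a < f b"
    show "a < b"
    proof (rule ccontr)
      assume "\<not> a < b"
      then have "b = a \<or> b < a" by auto
      then show False using mono[of b a] ab by auto
    qed
  qed
  have inj: "inj_on f S"
  proof (rule inj_onI)
    fix a b assume "a \<in> S" "b \<in> S" "f a = f b"
    then show "a = b" using mono[of a b] mono[of b a] by (metis less_irrefl linorder_neqE)
  qed
  have surj: "\<exists>a\<in>S. f a = n" for n
  proof (induction n)
    case 0
    have "lower_set S e = {}" using emin by (auto simp: lower_set_def)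
    then have "f e = 0" unfolding f_def by simp
    then show ?case using eS by blast
  next
    case (Suc n)
    then obtain a where aS: "a \<in> S" and fa: "f a = n" by blast
    have "\<exists>b\<in>S. a < b"
    proof (rule ccontr)
      assume "\<not> (\<exists>b\<in>S. a < b)"
      then have "S \<subseteq> lower_set S a \<union> {a}" by (auto simp: lower_set_def)
      then show False using fin aS inf finite_subset by blast
    qed
    then obtain b where bS: "b \<in> S" and ab: "a < b" by blast
    define B where "B = {c\<in>S. a < c \<and> c \<le> b}"
    have finB: "finite B"
      using fin bS by (rule_tac finite_subset[of B "lower_set S b \<union> {b}"]) (auto simp: B_def lower_set_def)
    have bB: "b \<in> B" using bS ab by (simp add: B_def)
    define c where "c = Min B"
    have cB: "c \<in> B" unfolding c_def using finB bB Min_in by blast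
    have cmin: "\<And>x. x \<in> B \<Longrightarrow> c \<le> x" unfolding c_def using finB by simp
    have eqL: "lower_set S c = insert a (lower_set S a)"
    proof
      show "lower_set S c \<subseteq> insert a (lower_set S a)"
      proof
        fix k assume k: "k \<in> lower_set S c"
        then have kS: "k \<in> S" and kc: "k < c" by (auto simp: lower_set_def)
        have "\<not> a < k"
        proof
          assume "a < k"
          moreover have "k \<le> b" using kc cB by (auto simp: B_def)
          ultimately have "k \<in> B" using kS by (simp add: B_def)
          then show False using cmin kc by fastforce
        qed
        then show "k \<in> insert a (lower_set S a)" using kS by (auto simp: lower_set_def)
      qed
    next
      show "insert a (lower_set S a) \<subseteq> lower_set S c"
        using cB aS by (auto simp: B_def lower_set_def)
    qed
    have "f c = Suc n" unfolding f_def eqL using fin aS fa f_def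
      by (simp add: lower_set_def)
    then show ?case using cB by (auto simp: B_def)
  qed
  have "f ` S = UNIV"
  proof (rule set_eqI)
    fix n :: nat show "n \<in> f ` S \<longleftrightarrow> n \<in> UNIV" using surj[of n] by (auto simp: image_iff)
  qed
  then have "bij_betw f S UNIV" using inj by (simp add: bij_betw_def)
  then show ?thesis using iff by blast
qed

lemma main_lemma:
  fixes S :: "'a::linorder set" and e :: 'a and q :: "'a \<Rightarrow> 'a \<Rightarrow> real"
  assumes "S \<noteq> {}" and eS: "e \<in> S" and emin: "\<forall>n\<in>S. e \<le> n"
    and H: "\<forall>n\<in>S - {e}. (\<forall>j. 0 \<le> q n j) \<and> finite (supp_m (q n)) \<and> supp_m (q n) \<subseteq> S
                        \<and> e \<in> supp_m (q n) \<and> (\<Sum>j\<in>supp_m (q n). q n j) = 1"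
  shows "(herm_disc_hypergroup S (max_conv e q) \<longleftrightarrow>
           ((finite S \<or> (\<exists>f::'a \<Rightarrow> nat. bij_betw f S UNIV \<and>
                          (\<forall>a\<in>S. \<forall>b\<in>S. a < b \<longleftrightarrow> f a < f b))) \<and>
            (\<forall>n\<in>S - {e}. lower_set S n \<subseteq> supp_m (q n) \<and>
                          supp_m (q n) \<subseteq> lower_set S n \<union> {n}) \<and>
            ((infinite S \<or> card S > 2) \<longrightarrow>
               (\<forall>m\<in>S. \<forall>n\<in>S. m \<noteq> e \<and> m < n \<longrightarrow>
                  q n e = q n m * q m e \<and>
                  finite (lower_set S n) \<and>
                  q n e * (1 + (\<Sum>k\<in>lower_set S n - {e}. 1 / q k e)) \<le> 1))))
       \<and> (((infinite S \<or> card S > 2) \<longrightarrow>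
               (\<forall>m\<in>S. \<forall>n\<in>S. m \<noteq> e \<and> m < n \<longrightarrow>
                  q n e = q n m * q m e \<and>
                  finite (lower_set S n) \<and>
                  q n e * (1 + (\<Sum>k\<in>lower_set S n - {e}. 1 / q k e)) \<le> 1))
          \<longleftrightarrow>
          ((infinite S \<or> card S > 2) \<longrightarrow>
               (\<forall>m\<in>S. \<forall>n\<in>S. m \<noteq> e \<and> m < n \<longrightarrow>
                  (let v = (\<lambda>k. if k = e then 1 else 1 / q k e) in
                   q n m = v m / v n \<and>
                   finite (lower_set S n) \<and>
                   (\<Sum>k\<in>lower_set S n. v k) \<le> v n))))"
  (is "(?h \<longleftrightarrow> (?i \<and> ?ii \<and> (?c \<longrightarrow> ?iii))) \<and> ((?c \<longrightarrow> ?iii) \<longleftrightarrow> (?c \<longrightarrow> ?iii'))")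
proof -
  have pos: "\<And>n. n \<in> S \<Longrightarrow> n \<noteq> e \<Longrightarrow> q n e > 0" using hypD(4)[OF H] by blast
  have eqv: "(q n e = q n m * q m e \<and> finite (lower_set S n) \<and>
                  q n e * (1 + (\<Sum>k\<in>lower_set S n - {e}. 1 / q k e)) \<le> 1)
          \<longleftrightarrow> (let v = (\<lambda>k. if k = e then 1 else 1 / q k e) in
                   q n m = v m / v n \<and>
                   finite (lower_set S n) \<and>
                   (\<Sum>k\<in>lower_set S n. v k) \<le> v n)"
    if mS: "m \<in> S" and nS: "n \<in> S" and me: "m \<noteq> e" and mn: "m < n" for m n
  proof -
    have em: "e < m" using emin mS me by force
    then have en: "e < n" using mn by simp
    then have ne: "n \<noteq> e" by simp
    have qm: "q m e > 0" using pos mS me by blast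
    have qn: "q n e > 0" using pos nS ne by blast
    define v where "v = (\<lambda>k. if k = e then 1 else 1 / q k e)"
    have e1: "(q n m = v m / v n) \<longleftrightarrow> q n e = q n m * q m e"
      using qm qn me ne unfolding v_def by (auto simp: field_simps)
    have e2: "(\<Sum>k\<in>lower_set S n. v k) \<le> v n \<longleftrightarrow>
              q n e * (1 + (\<Sum>k\<in>lower_set S n - {e}. 1 / q k e)) \<le> 1"
      if fin: "finite (lower_set S n)"
    proof -
      have eL: "e \<in> lower_set S n" using eS en by (simp add: lower_set_def)
      have "(\<Sum>k\<in>lower_set S n. v k) = v e + (\<Sum>k\<in>lower_set S n - {e}. v k)"
        using fin eL by (simp add: sum.remove)
      also have "(\<Sum>k\<in>lower_set S n - {e}. v k) = (\<Sum>k\<in>lower_set S n - {e}. 1 / q k e)"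
        by (rule sum.cong) (auto simp: v_def)
      finally have "(\<Sum>k\<in>lower_set S n. v k) = 1 + (\<Sum>k\<in>lower_set S n - {e}. 1 / q k e)"
        by (simp add: v_def)
      moreover have "v n = 1 / q n e" using ne by (simp add: v_def)
      ultimately show ?thesis using qn by (simp add: le_divide_eq mult.commute)
    qed
    show ?thesis unfolding Let_def v_def[symmetric] using e1 e2 by blast
  qed
  have part2: "(?c \<longrightarrow> ?iii) \<longleftrightarrow> (?c \<longrightarrow> ?iii')"
    using eqv by blast
  have A: "?h \<longleftrightarrow> assoc_mc S e q" by (rule herm_iff[OF eS emin H])
  have part1: "?h \<longleftrightarrow> (?i \<and> ?ii \<and> (?c \<longrightarrow> ?iii))"
  proof
    assume h: ?h
    then have As: "assoc_mc S e q" using A by blast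
    have key: "\<And>N K. N \<in> S \<Longrightarrow> K \<in> S \<Longrightarrow> N \<noteq> e \<Longrightarrow> K \<noteq> e \<Longrightarrow> N \<noteq> K \<Longrightarrow>
        q N K * q K e = max_conv e q N (max N K) e"
      using fwd_key[OF eS emin H As] by blast
    have a: "\<forall>m\<in>S. \<forall>n\<in>S. m \<noteq> e \<and> m < n \<longrightarrow> q n e = q n m * q m e"
    proof (intro ballI impI)
      fix m n assume mS: "m \<in> S" and nS: "n \<in> S" and c: "m \<noteq> e \<and> m < n"
      have ne: "n \<noteq> e" using emin mS c by force
      have "max n m = n" using c by simp
      moreover have me: "m \<noteq> e" and nm: "n \<noteq> m" using c by auto
      ultimately show "q n e = q n m * q m e" using key[OF nS mS ne me nm] ne by (simp add: mc_nn)
    qed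
    have ii: ?ii
    proof (intro ballI conjI subsetI)
      fix n j assume nS: "n \<in> S - {e}" and j: "j \<in> supp_m (q n)"
      have jS: "j \<in> S" using j hypD(3)[OF H] nS by blast
      show "j \<in> lower_set S n \<union> {n}"
      proof (rule ccontr)
        assume "j \<notin> lower_set S n \<union> {n}"
        then have nj: "n < j" using jS by (auto simp: lower_set_def)
        then have je: "j \<noteq> e" using emin nS by force
        have "max n j = j" using nj by simp
        then have "q n j * q j e = 0" using key[of n j] nS jS je nj by (simp add: mc_neq pt_mass_app)
        moreover have "q j e > 0" using pos jS je by blast
        moreover have "q n j \<noteq> 0" using j by (simp add: supp_m_def)
        ultimately show False by simp
      qed
    next
      fix n k assume nS: "n \<in> S - {e}" and k: "k \<in> lower_set S n"
      show "k \<in> supp_m (q n)"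
      proof (cases "k = e")
        case True then show ?thesis using H nS by blast
      next
        case False
        have "q n e = q n k * q k e" using a k nS False by (auto simp: lower_set_def)
        moreover have "q n e > 0" using pos nS by blast
        ultimately show ?thesis by (auto simp: supp_m_def)
      qed
    qed
    have finL: "\<forall>n\<in>S. finite (lower_set S n)"
    proof
      fix n assume nS: "n \<in> S"
      show "finite (lower_set S n)"
      proof (cases "n = e")
        case True
        then have "lower_set S n = {}" using emin by (auto simp: lower_set_def)
        then show ?thesis by simp
      next
        case False
        then show ?thesis using ii nS hypD(2)[OF H nS False] finite_subset by blast
      qed
    qed
    have iii: ?iii
    proof (intro ballI impI conjI)
      fix m n assume mS: "m \<in> S" and nS: "n \<in> S" and c: "m \<noteq> e \<and> m < n"
      show "q n e = q n m * q m e" using a mS nS c by blast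
      show fL: "finite (lower_set S n)" using finL nS by blast
      have ne: "n \<noteq> e" using emin mS c by force
      have en: "e < n" using emin nS ne by force
      have eL: "e \<in> lower_set S n" using eS en by (simp add: lower_set_def)
      have qn: "q n e > 0" using pos nS ne by blast
      have "q n e * (1 + (\<Sum>k\<in>lower_set S n - {e}. 1 / q k e)) =
            q n e + (\<Sum>k\<in>lower_set S n - {e}. q n e / q k e)"
        by (simp add: algebra_simps sum_distrib_left)
      also have "(\<Sum>k\<in>lower_set S n - {e}. q n e / q k e) = (\<Sum>k\<in>lower_set S n - {e}. q n k)"
      proof (rule sum.cong)
        fix k assume k: "k \<in> lower_set S n - {e}"
        then have "q n e = q n k * q k e" using a nS by (auto simp: lower_set_def)
        moreover have "q k e > 0" using pos k by (auto simp: lower_set_def)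
        ultimately show "q n e / q k e = q n k" by simp
      qed simp
      also have "q n e + (\<Sum>k\<in>lower_set S n - {e}. q n k) = (\<Sum>k\<in>lower_set S n. q n k)"
        using fL eL by (simp add: sum.remove)
      also have "\<dots> \<le> (\<Sum>k\<in>supp_m (q n). q n k)"
        by (rule sum_mono2) (use hypD[OF H nS ne] ii nS ne in auto)
      also have "\<dots> = 1" using hypD(5)[OF H nS ne] .
      finally show "q n e * (1 + (\<Sum>k\<in>lower_set S n - {e}. 1 / q k e)) \<le> 1" .
    qed
    have i: ?i
    proof (cases "finite S")
      case False then show ?thesis using nat_iso[OF False finL eS emin] by blast
    qed simp
    show "?i \<and> ?ii \<and> (?c \<longrightarrow> ?iii)" using i ii iii by blast
  next
    assume C: "?i \<and> ?ii \<and> (?c \<longrightarrow> ?iii)"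
    then have ii: ?ii by blast
    have a: "\<forall>m\<in>S. \<forall>n\<in>S. m \<noteq> e \<and> m < n \<longrightarrow> q n e = q n m * q m e"
    proof (intro ballI impI)
      fix m n assume mS: "m \<in> S" and nS: "n \<in> S" and c: "m \<noteq> e \<and> m < n"
      have em: "e < m" using emin mS c by force
      have ?c
      proof (cases "finite S")
        case True
        have sub: "{e, m, n} \<subseteq> S" using eS mS nS by blast
        have "card {e, m, n} = 3" using em c by auto
        then have "3 \<le> card S" using card_mono[OF True sub] by simp
        then show ?thesis by simp
      qed simp
      then show "q n e = q n m * q m e" using C mS nS c by blast
    qed
    have "assoc_mc S e q" by (rule assoc_from[OF eS emin H ii a])
    then show ?h using A by blast
  qed
  show ?thesis using part1 part2 by blast
qed

theorem theorem3p2: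
  fixes S :: "'a::linorder set" and e :: 'a and q :: "'a \<Rightarrow> 'a \<Rightarrow> real"
  assumes "S \<noteq> {}" and "e \<in> S" and "\<forall>n\<in>S. e \<le> n"
    and "\<forall>n\<in>S - {e}. (\<forall>j. 0 \<le> q n j) \<and> finite (supp_m (q n)) \<and> supp_m (q n) \<subseteq> S
                        \<and> e \<in> supp_m (q n) \<and> (\<Sum>j\<in>supp_m (q n). q n j) = 1"
  shows "(herm_disc_hypergroup S (max_conv e q) \<longleftrightarrow>
           ((finite S \<or> (\<exists>f::'a \<Rightarrow> nat. bij_betw f S UNIV \<and>
                          (\<forall>a\<in>S. \<forall>b\<in>S. a < b \<longleftrightarrow> f a < f b))) \<and>
            (\<forall>n\<in>S - {e}. lower_set S n \<subseteq> supp_m (q n) \<and>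
                          supp_m (q n) \<subseteq> lower_set S n \<union> {n}) \<and>
            ((infinite S \<or> card S > 2) \<longrightarrow>
               (\<forall>m\<in>S. \<forall>n\<in>S. m \<noteq> e \<and> m < n \<longrightarrow>
                  q n e = q n m * q m e \<and>
                  finite (lower_set S n) \<and>
                  q n e * (1 + (\<Sum>k\<in>lower_set S n - {e}. 1 / q k e)) \<le> 1))))
       \<and> (((infinite S \<or> card S > 2) \<longrightarrow>
               (\<forall>m\<in>S. \<forall>n\<in>S. m \<noteq> e \<and> m < n \<longrightarrow>
                  q n e = q n m * q m e \<and>
                  finite (lower_set S n) \<and>
                  q n e * (1 + (\<Sum>k\<in>lower_set S n - {e}. 1 / q k e)) \<le> 1))
          \<longleftrightarrow>
          ((infinite S \<or> card S > 2) \<longrightarrow>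
               (\<forall>m\<in>S. \<forall>n\<in>S. m \<noteq> e \<and> m < n \<longrightarrow>
                  (let v = (\<lambda>k. if k = e then 1 else 1 / q k e) in
                   q n m = v m / v n \<and>
                   finite (lower_set S n) \<and>
                   (\<Sum>k\<in>lower_set S n. v k) \<le> v n))))"
  by (rule main_lemma[OF assms])

end
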